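(* Let $\mathcal X=\mathcal X_1\times\cdots\times\mathcal X_b$, $\mathcal X_i=\mathbb R^{m_i\times n_i}$ with trace inner product and norms $\|\cdot\|_{(i)}$ (dual $\|\cdot\|_{(i)\star}$), $f$ continuously differentiable, $\mathcal D$ a distribution on subsets of $[b]$, and assume constants $L^0_{i,S},L^1_{i,S}\ge0$ exist such that for all $S\in\operatorname{supp}(\mathcal D)$, $i\in S$, $X\in\mathcal X$ and $\Gamma$ with $\Gamma_j=0$ for $j\notin S$: $\|\nabla_if(X+\Gamma)-\nabla_if(X)\|_{(i)\star}\le(L^0_{i,S}+L^1_{i,S}\|\nabla_if(X)\|_{(i)\star})\|\Gamma_i\|_{(i)}$. Let $S\in\operatorname{supp}(\mathcal D)$. Then for all $X\in\mathcal X$ and $\Gamma$ with $\Gamma_i=0$ for $i\notin S$, $$\big|f(X+\Gamma)-f(X)-\langle\nabla f(X),\Gamma\rangle\big|\le\sum_{i\in S}\frac{L^0_{i,S}+L^1_{i,S}\|\nabla_if(X)\|_{(i)\star}}2\|\Gamma_i\|_{(i)}^2.$$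
   Context: $\operatorname{supp}(\mathcal D)$ is the set of subsets of $[b]$ with positive probability under $\mathcal D$. *)

theory Defs
  imports "HOL-Analysis.Analysis" "HOL-Probability.Probability_Mass_Function"
begin

text \<open>The product space X = X_0 x ... x X_(b-1), X_i = R^(m_i x n_i), is represented by
  real ^ 'k for a finite coordinate type 'k, together with labelling maps blk, rw, cl:
  coordinate k is the entry (rw k, cl k) of block blk k.\<close>

definition block_layout :: 
  "nat \<Rightarrow> (nat \<Rightarrow> nat) \<Rightarrow> (nat \<Rightarrow> nat) \<Rightarrow> ('k \<Rightarrow> nat) \<Rightarrow> ('k \<Rightarrow> nat) \<Rightarrow> ('k \<Rightarrow> nat) \<Rightarrow> bool" where
  "block_layout b m n blk rw cl \<longleftrightarrow>
     (\<forall>k. blk k < b) \<and>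
     (\<forall>i<b. bij_betw (\<lambda>k. (rw k, cl k)) {k. blk k = i} ({..<m i} \<times> {..<n i}))"

definition Mat :: "nat \<Rightarrow> nat \<Rightarrow> (nat \<Rightarrow> nat \<Rightarrow> real) set" where
  "Mat m n = {A. \<forall>r c. (m \<le> r \<or> n \<le> c) \<longrightarrow> A r c = 0}"

definition trace_inner :: "nat \<Rightarrow> nat \<Rightarrow> (nat \<Rightarrow> nat \<Rightarrow> real) \<Rightarrow> (nat \<Rightarrow> nat \<Rightarrow> real) \<Rightarrow> real" where
  "trace_inner m n A B = (\<Sum>r<m. \<Sum>c<n. A r c * B r c)"

definition is_mat_norm :: "nat \<Rightarrow> nat \<Rightarrow> ((nat \<Rightarrow> nat \<Rightarrow> real) \<Rightarrow> real) \<Rightarrow> bool" where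
  "is_mat_norm m n N \<longleftrightarrow>
     (\<forall>A\<in>Mat m n. \<forall>B\<in>Mat m n. N (\<lambda>r c. A r c + B r c) \<le> N A + N B) \<and>
     (\<forall>A\<in>Mat m n. \<forall>t. N (\<lambda>r c. t * A r c) = \<bar>t\<bar> * N A) \<and>
     (\<forall>A\<in>Mat m n. N A = 0 \<longleftrightarrow> A = (\<lambda>r c. 0))"

definition dual_norm :: "nat \<Rightarrow> nat \<Rightarrow> ((nat \<Rightarrow> nat \<Rightarrow> real) \<Rightarrow> real) \<Rightarrow> (nat \<Rightarrow> nat \<Rightarrow> real) \<Rightarrow> real" where
  "dual_norm m n N G = Sup {trace_inner m n G Y | Y. Y \<in> Mat m n \<and> N Y \<le> 1}"

definition block :: "('k::finite \<Rightarrow> nat) \<Rightarrow> ('k \<Rightarrow> nat) \<Rightarrow> ('k \<Rightarrow> nat) \<Rightarrow> real ^ 'k \<Rightarrow> nat \<Rightarrow> nat \<Rightarrow> nat \<Rightarrow> real" where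
  "block blk rw cl X i r c = (\<Sum>k | blk k = i \<and> rw k = r \<and> cl k = c. X $ k)"

text \<open>Gradient of f at x (w.r.t. the Euclidean = summed trace inner product).\<close>
definition grad :: "(real ^ 'k::finite \<Rightarrow> real) \<Rightarrow> real ^ 'k \<Rightarrow> real ^ 'k" where
  "grad f x = (\<chi> k. frechet_derivative f (at x) (axis k 1))"

end

theory Submission
  imports Defs
begin

lemma layout_bij:
  assumes "block_layout b m n blk rw cl" "i < b"
  shows "bij_betw (\<lambda>k. (rw k, cl k)) {k. blk k = i} ({..<m i} \<times> {..<n i})"
  using assms unfolding block_layout_def by blast

lemma block_Mat:
  fixes blk rw cl :: "'k::finite \<Rightarrow> nat"
  assumes "block_layout b m n blk rw cl" "i < b"
  shows "block blk rw cl v i \<in> Mat (m i) (n i)"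
proof -
  have bij: "bij_betw (\<lambda>k. (rw k, cl k)) {k. blk k = i} ({..<m i} \<times> {..<n i})"
    using layout_bij[OF assms] .
  { fix r c assume "m i \<le> r \<or> n i \<le> c"
    moreover have "\<forall>k. blk k = i \<longrightarrow> rw k < m i \<and> cl k < n i"
      using bij_betwE[OF bij] by auto
    ultimately have E: "{k. blk k = i \<and> rw k = r \<and> cl k = c} = {}"
      by auto
    have "block blk rw cl v i r c = 0" unfolding block_def E by simp }
  then show ?thesis unfolding Mat_def by blast
qed

lemma block_at:
  fixes blk rw cl :: "'k::finite \<Rightarrow> nat"
  assumes "block_layout b m n blk rw cl" "i < b" "blk k = i"
  shows "block blk rw cl v i (rw k) (cl k) = v $ k"
proof -
  have bij: "bij_betw (\<lambda>k. (rw k, cl k)) {k. blk k = i} ({..<m i} \<times> {..<n i})"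
    using layout_bij[OF assms(1,2)] .
  have "{k'. blk k' = i \<and> rw k' = rw k \<and> cl k' = cl k} = {k}"
    using bij assms(3) unfolding bij_betw_def inj_on_def by auto
  then show ?thesis unfolding block_def by simp
qed

lemma block_add: "block blk rw cl (u + v) i = (\<lambda>r c. block blk rw cl u i r c + block blk rw cl v i r c)"
  unfolding block_def by (simp add: sum.distrib)

lemma block_diff: "block blk rw cl (u - v) i = (\<lambda>r c. block blk rw cl u i r c - block blk rw cl v i r c)"
  unfolding block_def by (simp add: sum_subtractf)

lemma block_scale: "block blk rw cl (a *\<^sub>R v) i = (\<lambda>r c. a * block blk rw cl v i r c)"
  unfolding block_def by (simp add: sum_distrib_left)

lemma block_zero: "block blk rw cl 0 i = (\<lambda>r c. 0)"
  unfolding block_def by simp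

lemma inner_block:
  fixes blk rw cl :: "'k::finite \<Rightarrow> nat"
  assumes "block_layout b m n blk rw cl" "i < b"
  shows "(\<Sum>k\<in>{k. blk k = i}. u $ k * v $ k) = trace_inner (m i) (n i) (block blk rw cl u i) (block blk rw cl v i)"
proof -
  have bij: "bij_betw (\<lambda>k. (rw k, cl k)) {k. blk k = i} ({..<m i} \<times> {..<n i})"
    using layout_bij[OF assms] .
  have "trace_inner (m i) (n i) (block blk rw cl u i) (block blk rw cl v i)
      = (\<Sum>(r,c)\<in>{..<m i} \<times> {..<n i}. block blk rw cl u i r c * block blk rw cl v i r c)"
    unfolding trace_inner_def by (simp add: sum.cartesian_product)
  also have "\<dots> = (\<Sum>k\<in>{k. blk k = i}. block blk rw cl u i (rw k) (cl k) * block blk rw cl v i (rw k) (cl k))"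
    using sum.reindex_bij_betw[OF bij, of "\<lambda>(r,c). block blk rw cl u i r c * block blk rw cl v i r c"]
    by simp
  also have "\<dots> = (\<Sum>k\<in>{k. blk k = i}. u $ k * v $ k)"
    by (rule sum.cong) (auto simp: block_at[OF assms])
  finally show ?thesis by simp
qed

lemma mat_norm_zero:
  assumes "is_mat_norm m n N"
  shows "N (\<lambda>r c. 0) = 0"
proof -
  have "(\<lambda>r c. 0::real) \<in> Mat m n" unfolding Mat_def by simp
  then show ?thesis using assms unfolding is_mat_norm_def by blast
qed

lemma norm_nonneg_mat:
  assumes "is_mat_norm m n N" "A \<in> Mat m n"
  shows "N A \<ge> 0"
proof -
  have mA: "(\<lambda>r c. (-1) * A r c) \<in> Mat m n" using assms(2) unfolding Mat_def by auto
  have hom: "\<forall>A\<in>Mat m n. \<forall>t. N (\<lambda>r c. t * A r c) = \<bar>t\<bar> * N A"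
    using assms(1) unfolding is_mat_norm_def by blast
  have tri: "\<forall>A\<in>Mat m n. \<forall>B\<in>Mat m n. N (\<lambda>r c. A r c + B r c) \<le> N A + N B"
    using assms(1) unfolding is_mat_norm_def by blast
  have "N (\<lambda>r c. A r c + (-1) * A r c) \<le> N A + N (\<lambda>r c. (-1) * A r c)"
    using tri[rule_format, OF assms(2) mA] by simp
  moreover have "N (\<lambda>r c. (-1) * A r c) = N A" using hom[rule_format, OF assms(2), of "-1"] by simp
  moreover have "N (\<lambda>r c. A r c + (-1) * A r c) = 0"
  proof -
    show ?thesis using mat_norm_zero[OF assms(1)] by simp
  qed
  ultimately show ?thesis by linarith
qed

lemma dual_bdd:
  fixes blk rw cl :: "'k::finite \<Rightarrow> nat"
  assumes L: "block_layout b m n blk rw cl" and ib: "i < b" and NN: "is_mat_norm (m i) (n i) NN"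
  shows "bdd_above {trace_inner (m i) (n i) G Y | Y. Y \<in> Mat (m i) (n i) \<and> NN Y \<le> 1}"
proof -
  define Nt where "Nt = (\<lambda>v::real^'k. NN (block blk rw cl v i))"
  have BM: "\<And>v. block blk rw cl v i \<in> Mat (m i) (n i)" using block_Mat[OF L ib] .
  have tri: "\<forall>A\<in>Mat (m i) (n i). \<forall>B\<in>Mat (m i) (n i). NN (\<lambda>r c. A r c + B r c) \<le> NN A + NN B"
    using NN unfolding is_mat_norm_def by blast
  have hom: "\<forall>A\<in>Mat (m i) (n i). \<forall>t. NN (\<lambda>r c. t * A r c) = \<bar>t\<bar> * NN A"
    using NN unfolding is_mat_norm_def by blast
  have zer: "\<forall>A\<in>Mat (m i) (n i). NN A = 0 \<longleftrightarrow> A = (\<lambda>r c. 0)"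
    using NN unfolding is_mat_norm_def by blast
  have Nt_add: "\<And>u v. Nt (u+v) \<le> Nt u + Nt v" unfolding Nt_def block_add using tri BM by blast
  have Nt_scale: "\<And>a v. Nt (a *\<^sub>R v) = \<bar>a\<bar> * Nt v" unfolding Nt_def block_scale using hom BM by blast
  have Nt_nonneg: "\<And>v. Nt v \<ge> 0" unfolding Nt_def using norm_nonneg_mat[OF NN BM] .
  have Nt0: "Nt 0 = 0" unfolding Nt_def block_zero using mat_norm_zero[OF NN] .
  have Nt_sum: "Nt (\<Sum>k\<in>A. g k) \<le> (\<Sum>k\<in>A. Nt (g k))" if "finite A" for A :: "'k set" and g
    using that
  proof (induction A rule: finite_induct)
    case empty then show ?case by (simp add: Nt0)
  next
    case (insert x F)
    then show ?case using Nt_add[of "g x" "sum g F"] by simp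
  qed
  define M where "M = (\<Sum>k\<in>UNIV. Nt (axis k 1))"
  have Nt_le: "Nt w \<le> M * norm w" for w
  proof -
    have "w = (\<Sum>k\<in>UNIV. w$k *\<^sub>R axis k (1::real))"
      using basis_expansion[of w] by (simp add: scalar_mult_eq_scaleR)
    then have "Nt w \<le> (\<Sum>k\<in>UNIV. Nt (w$k *\<^sub>R axis k 1))"
      using Nt_sum[of UNIV "\<lambda>k. w$k *\<^sub>R axis k 1"] by simp
    also have "\<dots> = (\<Sum>k\<in>UNIV. \<bar>w$k\<bar> * Nt (axis k 1))" by (simp add: Nt_scale)
    also have "\<dots> \<le> (\<Sum>k\<in>UNIV. norm w * Nt (axis k 1))"
      by (intro sum_mono mult_right_mono component_le_norm_cart Nt_nonneg)
    also have "\<dots> = M * norm w" by (simp add: M_def sum_distrib_left mult.commute)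
    finally show ?thesis .
  qed
  have M0: "M \<ge> 0" unfolding M_def by (intro sum_nonneg Nt_nonneg)
  have Nt_lip: "\<bar>Nt u - Nt v\<bar> \<le> M * norm (u - v)" for u v
  proof -
    have "Nt u \<le> Nt v + Nt (u - v)" using Nt_add[of v "u-v"] by simp
    moreover have "Nt v \<le> Nt u + Nt (v - u)" using Nt_add[of u "v-u"] by simp
    moreover have "Nt (v - u) = Nt (u - v)" using Nt_scale[of "-1" "u-v"] by simp
    moreover have "Nt (u-v) \<le> M * norm (u-v)" by (rule Nt_le)
    ultimately show ?thesis by (simp add: abs_le_iff)
  qed
  have cont: "continuous_on UNIV Nt"
    by (rule lipschitz_on_continuous_on[of M], rule lipschitz_onI)
       (use Nt_lip M0 in \<open>simp_all add: dist_real_def dist_norm\<close>)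
  define V where "V = {v::real^'k. \<forall>k. blk k \<noteq> i \<longrightarrow> v$k = 0}"
  have closedV: "closed V" unfolding V_def by (rule closed_substandard_cart)
  define K where "K = sphere (0::real^'k) 1 \<inter> V"
  have compK: "compact K" unfolding K_def using closedV by (simp add: compact_Int_closed)
  have posK: "Nt v > 0" if vK: "v \<in> K" for v
  proof (rule ccontr)
    assume "\<not> Nt v > 0" then have "Nt v = 0" using Nt_nonneg[of v] by linarith
    then have B0: "block blk rw cl v i = (\<lambda>r c. 0)" unfolding Nt_def using zer BM by blast
    have "v = 0"
    proof (rule vec_eq_iff[THEN iffD2], rule allI)
      fix k show "v$k = 0$k"
      proof (cases "blk k = i")
        case True then have "v$k = block blk rw cl v i (rw k) (cl k)" using block_at[OF L ib] by simp
        then show ?thesis using B0 by simp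
      next
        case False then show ?thesis using vK unfolding K_def V_def by simp
      qed
    qed
    then show False using vK unfolding K_def by simp
  qed
  obtain c where c0: "c > 0" and cK: "\<forall>v\<in>K. c \<le> Nt v"
  proof (cases "K = {}")
    case True then show ?thesis using that[of 1] by simp
  next
    case False
    then obtain x where "x \<in> K" "\<forall>y\<in>K. Nt x \<le> Nt y"
      using continuous_attains_inf[OF compK False continuous_on_subset[OF cont]] by blast
    then show ?thesis using that[of "Nt x"] posK by blast
  qed
  have lowV: "c * norm v \<le> Nt v" if vV: "v \<in> V" for v
  proof (cases "v = 0")
    case True then show ?thesis using Nt_nonneg[of v] by simp
  next
    case False
    define w where "w = (1 / norm v) *\<^sub>R v"
    have "w \<in> K" unfolding K_def w_def using vV False by (auto simp: V_def)
    then have "c \<le> Nt w" using cK by blast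
    also have "Nt w = Nt v / norm v" unfolding w_def Nt_scale by simp
    finally show ?thesis using False by (simp add: field_simps)
  qed
  define B where "B = (\<Sum>r<m i. \<Sum>c'<n i. \<bar>G r c'\<bar> * (1 / c))"
  show ?thesis
  proof (rule bdd_aboveI[of _ B], clarify)
    fix Y assume YM: "Y \<in> Mat (m i) (n i)" and YN: "NN Y \<le> 1"
    define y where "y = (\<chi> k. if blk k = i then Y (rw k) (cl k) else 0)"
    have yV: "y \<in> V" unfolding V_def y_def by simp
    have surj: "\<exists>k. blk k = i \<and> rw k = r \<and> cl k = c'" if "r < m i" "c' < n i" for r c'
    proof -
      have "(r, c') \<in> (\<lambda>k. (rw k, cl k)) ` {k. blk k = i}"
        using bij_betw_imp_surj_on[OF layout_bij[OF L ib]] that by auto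
      then show ?thesis by auto
    qed
    have by_: "block blk rw cl y i = Y"
    proof (intro ext)
      fix r c'
      show "block blk rw cl y i r c' = Y r c'"
      proof (cases "r < m i \<and> c' < n i")
        case True
        then obtain k where k: "blk k = i" "rw k = r" "cl k = c'" using surj by blast
        then show ?thesis using block_at[OF L ib k(1), of y] by (simp add: y_def)
      next
        case False
        then show ?thesis using BM[of y] YM unfolding Mat_def by auto
      qed
    qed
    have "c * norm y \<le> 1" using lowV[OF yV] YN unfolding Nt_def by_ by simp
    then have ny: "norm y \<le> 1 / c" using c0 by (simp add: field_simps)
    have Yle: "\<bar>Y r c'\<bar> \<le> 1 / c" if rc: "r < m i" "c' < n i" for r c'
    proof -
      obtain k where k: "blk k = i" "rw k = r" "cl k = c'" using surj[OF rc] by blast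
      then have "Y r c' = y$k" by (simp add: y_def)
      then show ?thesis using component_le_norm_cart[of y k] ny by simp
    qed
    have "G r c' * Y r c' \<le> \<bar>G r c'\<bar> * (1 / c)" if "r < m i" "c' < n i" for r c'
    proof -
      have "G r c' * Y r c' \<le> \<bar>G r c'\<bar> * \<bar>Y r c'\<bar>" by (metis abs_ge_self abs_mult)
      also have "\<dots> \<le> \<bar>G r c'\<bar> * (1 / c)" by (intro mult_left_mono Yle that) simp
      finally show ?thesis .
    qed
    then show "trace_inner (m i) (n i) G Y \<le> B"
      unfolding trace_inner_def B_def by (intro sum_mono) auto
  qed
qed

lemma dual_ineq:
  fixes blk rw cl :: "'k::finite \<Rightarrow> nat"
  assumes L: "block_layout b m n blk rw cl" and ib: "i < b" and NN: "is_mat_norm (m i) (n i) NN"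
    and ZM: "Z \<in> Mat (m i) (n i)"
  shows "trace_inner (m i) (n i) G Z \<le> dual_norm (m i) (n i) NN G * NN Z"
proof (cases "Z = (\<lambda>r c. 0)")
  case True
  then show ?thesis using mat_norm_zero[OF NN] by (simp add: trace_inner_def)
next
  case False
  have "NN Z \<noteq> 0" using False ZM NN unfolding is_mat_norm_def by blast
  then have pos: "NN Z > 0" using norm_nonneg_mat[OF NN ZM] by linarith
  define Y where "Y = (\<lambda>r c. (1 / NN Z) * Z r c)"
  have YM: "Y \<in> Mat (m i) (n i)" using ZM unfolding Mat_def Y_def by auto
  have "NN Y = \<bar>1 / NN Z\<bar> * NN Z" unfolding Y_def using NN ZM unfolding is_mat_norm_def by blast
  then have YN: "NN Y \<le> 1" using pos by simp
  have tY: "trace_inner (m i) (n i) G Y = trace_inner (m i) (n i) G Z / NN Z"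
    unfolding trace_inner_def Y_def by (simp add: sum_divide_distrib)
  have "trace_inner (m i) (n i) G Y \<le> dual_norm (m i) (n i) NN G"
    unfolding dual_norm_def by (rule cSup_upper) (use YM YN dual_bdd[OF L ib NN] in auto)
  then show ?thesis using tY pos by (simp add: field_simps)
qed


theorem lemma10:
  fixes f :: "real ^ 'k::finite \<Rightarrow> real"
    and b :: nat and m n :: "nat \<Rightarrow> nat"
    and blk rw cl :: "'k \<Rightarrow> nat"
    and N :: "nat \<Rightarrow> (nat \<Rightarrow> nat \<Rightarrow> real) \<Rightarrow> real"
    and D :: "nat set pmf"
    and L0 L1 :: "nat \<Rightarrow> nat set \<Rightarrow> real"
    and S :: "nat set" and X \<Gamma> :: "real ^ 'k"
  assumes layout: "block_layout b m n blk rw cl"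
    and norms: "\<forall>i<b. is_mat_norm (m i) (n i) (N i)"
    and diff: "\<forall>x. f differentiable (at x)"
    and C1: "continuous_on UNIV (grad f)"
    and D_supp: "set_pmf D \<subseteq> Pow {..<b}"
    and L_nonneg: "\<forall>S'\<in>set_pmf D. \<forall>i\<in>S'. L0 i S' \<ge> 0 \<and> L1 i S' \<ge> 0"
    and smooth: "\<forall>S'\<in>set_pmf D. \<forall>i\<in>S'. \<forall>Y G. (\<forall>k. blk k \<notin> S' \<longrightarrow> G $ k = 0) \<longrightarrow>
        dual_norm (m i) (n i) (N i)
          (\<lambda>r c. block blk rw cl (grad f (Y + G)) i r c - block blk rw cl (grad f Y) i r c)
        \<le> (L0 i S' + L1 i S' * dual_norm (m i) (n i) (N i) (block blk rw cl (grad f Y) i))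
           * N i (block blk rw cl G i)"
    and S_in: "S \<in> set_pmf D"
    and Gamma_supp: "\<forall>k. blk k \<notin> S \<longrightarrow> \<Gamma> $ k = 0"
  shows "\<bar>f (X + \<Gamma>) - f X - grad f X \<bullet> \<Gamma>\<bar>
    \<le> (\<Sum>i\<in>S. (L0 i S + L1 i S * dual_norm (m i) (n i) (N i) (block blk rw cl (grad f X) i)) / 2
                 * (N i (block blk rw cl \<Gamma> i))\<^sup>2)"

proof -
  let ?bl = "block blk rw cl"
  define Df where "Df = (\<lambda>x. frechet_derivative f (at x))"
  have hasD: "(f has_derivative Df x) (at x)" for x
    using diff frechet_derivative_works unfolding Df_def by blast
  have linD: "linear (Df x)" for x using has_derivative_linear[OF hasD] .
  have grad_inner: "grad f x \<bullet> v = Df x v" for x v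
  proof -
    have "Df x v = Df x (\<Sum>k\<in>UNIV. v$k *\<^sub>R axis k 1)"
      using basis_expansion[of v] by (simp add: scalar_mult_eq_scaleR)
    also have "\<dots> = (\<Sum>k\<in>UNIV. v$k * Df x (axis k 1))"
      by (simp add: linear_sum[OF linD] linear_cmul[OF linD] o_def)
    finally show ?thesis by (simp add: inner_vec_def grad_def Df_def mult.commute)
  qed
  have Sb: "S \<subseteq> {..<b}" using D_supp S_in by blast
  then have finS: "finite S" using finite_subset by blast
  define cS where "cS i = L0 i S + L1 i S * dual_norm (m i) (n i) (N i) (?bl (grad f X) i)" for i
  define C where "C = (\<Sum>i\<in>S. cS i * (N i (?bl \<Gamma> i))\<^sup>2)"
  define g where "g t = f (X + t *\<^sub>R \<Gamma>)" for t
  define dg where "dg t = grad f (X + t *\<^sub>R \<Gamma>) \<bullet> \<Gamma>" for t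
  have gD: "(g has_real_derivative dg t) (at t)" for t
  proof -
    have l: "((\<lambda>t. X + t *\<^sub>R \<Gamma>) has_derivative (\<lambda>h. h *\<^sub>R \<Gamma>)) (at t)"
      by (auto intro!: derivative_eq_intros)
    have "((\<lambda>t. f (X + t *\<^sub>R \<Gamma>)) has_derivative (\<lambda>h. Df (X + t *\<^sub>R \<Gamma>) (h *\<^sub>R \<Gamma>))) (at t)"
      by (rule has_derivative_compose[OF l hasD])
    moreover have "(\<lambda>h. Df (X + t *\<^sub>R \<Gamma>) (h *\<^sub>R \<Gamma>)) = (*) (dg t)"
      by (rule ext) (simp add: linear_cmul[OF linD] dg_def grad_inner mult.commute)
    ultimately show ?thesis unfolding has_field_derivative_def g_def by simp
  qed
  have key: "\<bar>dg t - dg 0\<bar> \<le> t * C" if t0: "t \<ge> 0" for t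
  proof -
    define u where "u = grad f (X + t *\<^sub>R \<Gamma>) - grad f X"
    have "dg t - dg 0 = u \<bullet> \<Gamma>" by (simp add: dg_def u_def inner_diff_left)
    also have "\<dots> = (\<Sum>k\<in>UNIV. u$k * \<Gamma>$k)" by (simp add: inner_vec_def)
    also have "\<dots> = (\<Sum>k\<in>UNIV. \<Sum>i\<in>S. if blk k = i then u$k * \<Gamma>$k else 0)"
    proof (rule sum.cong[OF refl])
      fix k
      show "u$k * \<Gamma>$k = (\<Sum>i\<in>S. if blk k = i then u$k * \<Gamma>$k else 0)"
        using Gamma_supp finS by (cases "blk k \<in> S") (auto simp: sum.delta)
    qed
    also have "\<dots> = (\<Sum>i\<in>S. \<Sum>k\<in>UNIV. if blk k = i then u$k * \<Gamma>$k else 0)"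
      by (rule sum.swap)
    also have "\<dots> = (\<Sum>i\<in>S. \<Sum>k\<in>{k. blk k = i}. u$k * \<Gamma>$k)"
      by (simp add: sum.inter_filter[symmetric])
    also have "\<dots> = (\<Sum>i\<in>S. trace_inner (m i) (n i)
        (\<lambda>r c. ?bl (grad f (X + t *\<^sub>R \<Gamma>)) i r c - ?bl (grad f X) i r c) (?bl \<Gamma> i))"
    proof (rule sum.cong[OF refl])
      fix i assume "i \<in> S"
      then have ib: "i < b" using Sb by auto
      show "(\<Sum>k\<in>{k. blk k = i}. u$k * \<Gamma>$k) = trace_inner (m i) (n i)
        (\<lambda>r c. ?bl (grad f (X + t *\<^sub>R \<Gamma>)) i r c - ?bl (grad f X) i r c) (?bl \<Gamma> i)"
        unfolding inner_block[OF layout ib] u_def block_diff ..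
    qed
    finally have eq: "dg t - dg 0 = \<dots>" .
    have bnd: "\<bar>trace_inner (m i) (n i)
        (\<lambda>r c. ?bl (grad f (X + t *\<^sub>R \<Gamma>)) i r c - ?bl (grad f X) i r c) (?bl \<Gamma> i)\<bar>
        \<le> t * (cS i * (N i (?bl \<Gamma> i))\<^sup>2)" if iS: "i \<in> S" for i
    proof -
      have ib: "i < b" using Sb iS by auto
      have NN: "is_mat_norm (m i) (n i) (N i)" using norms ib by blast
      define G where "G = (\<lambda>r c. ?bl (grad f (X + t *\<^sub>R \<Gamma>)) i r c - ?bl (grad f X) i r c)"
      define Z where "Z = ?bl \<Gamma> i"
      have ZM: "Z \<in> Mat (m i) (n i)" unfolding Z_def by (rule block_Mat[OF layout ib])
      define Z' where "Z' = (\<lambda>r c. (-1) * Z r c)"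
      have Z'M: "Z' \<in> Mat (m i) (n i)" using ZM unfolding Mat_def Z'_def by auto
      have hom: "\<forall>A\<in>Mat (m i) (n i). \<forall>t. N i (\<lambda>r c. t * A r c) = \<bar>t\<bar> * N i A"
        using NN unfolding is_mat_norm_def by blast
      have NZ': "N i Z' = N i Z" unfolding Z'_def using hom[rule_format, OF ZM, of "-1"] by simp
      have tZ': "trace_inner (m i) (n i) G Z' = - trace_inner (m i) (n i) G Z"
        unfolding trace_inner_def Z'_def by (simp add: sum_negf)
      have NZ0: "N i Z \<ge> 0" by (rule norm_nonneg_mat[OF NN ZM])
      have "\<forall>k. blk k \<notin> S \<longrightarrow> (t *\<^sub>R \<Gamma>) $ k = 0" using Gamma_supp by simp
      then have "dual_norm (m i) (n i) (N i) G \<le> cS i * N i (?bl (t *\<^sub>R \<Gamma>) i)"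
        using smooth S_in iS unfolding G_def cS_def by blast
      also have "N i (?bl (t *\<^sub>R \<Gamma>) i) = t * N i Z"
        unfolding block_scale Z_def using hom block_Mat[OF layout ib] t0 by simp
      finally have dG: "dual_norm (m i) (n i) (N i) G \<le> cS i * (t * N i Z)" .
      have "\<bar>trace_inner (m i) (n i) G Z\<bar> \<le> dual_norm (m i) (n i) (N i) G * N i Z"
        using dual_ineq[OF layout ib NN ZM, of G] dual_ineq[OF layout ib NN Z'M, of G] tZ' NZ'
        by (simp add: abs_le_iff)
      also have "\<dots> \<le> cS i * (t * N i Z) * N i Z" by (rule mult_right_mono[OF dG NZ0])
      finally show ?thesis unfolding G_def Z_def by (simp add: power2_eq_square algebra_simps)
    qed
    have "\<bar>dg t - dg 0\<bar> \<le> (\<Sum>i\<in>S. \<bar>trace_inner (m i) (n i)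
        (\<lambda>r c. ?bl (grad f (X + t *\<^sub>R \<Gamma>)) i r c - ?bl (grad f X) i r c) (?bl \<Gamma> i)\<bar>)"
      unfolding eq by (rule sum_abs)
    also have "\<dots> \<le> (\<Sum>i\<in>S. t * (cS i * (N i (?bl \<Gamma> i))\<^sup>2))"
      by (rule sum_mono) (rule bnd)
    also have "\<dots> = t * C" unfolding C_def by (simp add: sum_distrib_left)
    finally show ?thesis .
  qed
  have up: "g 1 - g 0 - dg 0 - C / 2 \<le> 0"
  proof -
    have "(\<lambda>t. g t - g 0 - t * dg 0 - t\<^sup>2 / 2 * C) 1 \<le> (\<lambda>t. g t - g 0 - t * dg 0 - t\<^sup>2 / 2 * C) 0"
    proof (rule DERIV_nonpos_imp_nonincreasing[of 0 1])
      fix t :: real assume "0 \<le> t" "t \<le> 1"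
      have "((\<lambda>t. g t - g 0 - t * dg 0 - t\<^sup>2 / 2 * C) has_real_derivative (dg t - dg 0 - t * C)) (at t)"
        by (auto intro!: derivative_eq_intros gD simp: power2_eq_square)
      moreover have "dg t - dg 0 - t * C \<le> 0" using key[OF \<open>0 \<le> t\<close>] by (simp add: abs_le_iff)
      ultimately show "\<exists>y. ((\<lambda>t. g t - g 0 - t * dg 0 - t\<^sup>2 / 2 * C) has_real_derivative y) (at t) \<and> y \<le> 0"
        by blast
    qed simp
    then show ?thesis by simp
  qed
  have lo: "g 1 - g 0 - dg 0 + C / 2 \<ge> 0"
  proof -
    have "(\<lambda>t. g t - g 0 - t * dg 0 + t\<^sup>2 / 2 * C) 0 \<le> (\<lambda>t. g t - g 0 - t * dg 0 + t\<^sup>2 / 2 * C) 1"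
    proof (rule DERIV_nonneg_imp_nondecreasing[of 0 1])
      fix t :: real assume "0 \<le> t" "t \<le> 1"
      have "((\<lambda>t. g t - g 0 - t * dg 0 + t\<^sup>2 / 2 * C) has_real_derivative (dg t - dg 0 + t * C)) (at t)"
        by (auto intro!: derivative_eq_intros gD simp: power2_eq_square)
      moreover have "dg t - dg 0 + t * C \<ge> 0" using key[OF \<open>0 \<le> t\<close>] by (simp add: abs_le_iff)
      ultimately show "\<exists>y. ((\<lambda>t. g t - g 0 - t * dg 0 + t\<^sup>2 / 2 * C) has_real_derivative y) (at t) \<and> y \<ge> 0"
        by blast
    qed simp
    then show ?thesis by simp
  qed
  have "\<bar>f (X + \<Gamma>) - f X - grad f X \<bullet> \<Gamma>\<bar> \<le> C / 2"
  proof -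
    have "g 1 = f (X + \<Gamma>)" "g 0 = f X" "dg 0 = grad f X \<bullet> \<Gamma>" by (simp_all add: g_def dg_def)
    then show ?thesis using up lo by (simp only: abs_le_iff) linarith
  qed
  also have "C / 2 = (\<Sum>i\<in>S. cS i / 2 * (N i (?bl \<Gamma> i))\<^sup>2)"
    unfolding C_def by (simp add: sum_divide_distrib)
  finally show ?thesis unfolding cS_def .
qed

end
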